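(* Let $D\in\operatorname{Div}(G)$, fix $q\in V(G)$, and define the divisor $D'$ by $[D']=[D]-Q\lfloor L_{(q)}[D]\rfloor$, where $\lfloor\cdot\rfloor$ is the coordinatewise floor. Then $D'\sim D$ and $|D'(v)|<\deg(v)$ for every vertex $v\ne q$.
   Context: $G$ is a finite connected multigraph without loop edges, with vertex set $V(G)=\{v_1,\dots,v_n\}$ and edge set $E(G)$. A divisor is an element $D=\sum_v D(v)(v)$ of the free abelian group $\operatorname{Div}(G)$ on $V(G)$, identified with the integer column vector $[D]$. $Q$ is the Laplacian matrix ($q_{ii}=\deg(v_i)$, and for $i\ne j$, $-q_{ij}$ is the number of edges between $v_i$ and $v_j$). $D_1\sim D_2$ means $[D_1]-[D_2]=Q\mathbf{f}$ for some integer vector $\mathbf{f}$. For $q=v_i$, $Q_i$ is the invertible matrix obtained from $Q$ by deleting the $i$-th row and column, and $L_{(q)}$ is the $n\times n$ matrix obtained from $Q_i^{-1}$ by inserting a zero row and a zero column in position $i$; it satisfies $QL_{(q)}=I+R$, where $R$ has all entries $-1$ in row $i$ and zeros elsewhere. *)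

theory Defs
  imports "Jordan_Normal_Form.Determinant"
begin

text \<open>A finite loopless multigraph on vertex set {0..<n}: m i j is the number of
edges between vertices i and j.\<close>

definition multigraph :: "nat \<Rightarrow> (nat \<Rightarrow> nat \<Rightarrow> nat) \<Rightarrow> bool" where
  "multigraph n m \<longleftrightarrow> (\<forall>i<n. \<forall>j<n. m i j = m j i) \<and> (\<forall>i<n. m i i = 0)"

definition mg_edges :: "nat \<Rightarrow> (nat \<Rightarrow> nat \<Rightarrow> nat) \<Rightarrow> (nat \<times> nat) set" where
  "mg_edges n m = {(a, b). a < n \<and> b < n \<and> 0 < m a b}"

definition mg_connected :: "nat \<Rightarrow> (nat \<Rightarrow> nat \<Rightarrow> nat) \<Rightarrow> bool" where
  "mg_connected n m \<longleftrightarrow> (\<forall>i<n. \<forall>j<n. (i, j) \<in> (mg_edges n m)\<^sup>*)"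

definition mg_deg :: "nat \<Rightarrow> (nat \<Rightarrow> nat \<Rightarrow> nat) \<Rightarrow> nat \<Rightarrow> nat" where
  "mg_deg n m i = (\<Sum>j<n. m i j)"

definition laplacian :: "nat \<Rightarrow> (nat \<Rightarrow> nat \<Rightarrow> nat) \<Rightarrow> int mat" where
  "laplacian n m = mat n n (\<lambda>(i, j). if i = j then int (mg_deg n m i) else - int (m i j))"

definition div_equiv :: "nat \<Rightarrow> (nat \<Rightarrow> nat \<Rightarrow> nat) \<Rightarrow> int vec \<Rightarrow> int vec \<Rightarrow> bool" where
  "div_equiv n m D1 D2 \<longleftrightarrow> (\<exists>f \<in> carrier_vec n. D1 - D2 = laplacian n m *\<^sub>v f)"

definition reduced_laplacian :: "nat \<Rightarrow> (nat \<Rightarrow> nat \<Rightarrow> nat) \<Rightarrow> nat \<Rightarrow> real mat" where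
  "reduced_laplacian n m q = map_mat real_of_int (mat_delete (laplacian n m) q q)"

definition reduced_laplacian_inv :: "nat \<Rightarrow> (nat \<Rightarrow> nat \<Rightarrow> nat) \<Rightarrow> nat \<Rightarrow> real mat" where
  "reduced_laplacian_inv n m q = (THE B. B \<in> carrier_mat (n - 1) (n - 1) \<and>
      reduced_laplacian n m q * B = 1\<^sub>m (n - 1) \<and> B * reduced_laplacian n m q = 1\<^sub>m (n - 1))"

text \<open>L_(q): Q_i^{-1} with a zero row and a zero column inserted in position q.\<close>
definition L_mat :: "nat \<Rightarrow> (nat \<Rightarrow> nat \<Rightarrow> nat) \<Rightarrow> nat \<Rightarrow> real mat" where
  "L_mat n m q = mat n n (\<lambda>(i, j). if i = q \<or> j = q then 0
      else reduced_laplacian_inv n m q $$ (if i < q then i else i - 1, if j < q then j else j - 1))"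

end

theory Submission
  imports Defs
begin

definition ins :: "nat \<Rightarrow> nat \<Rightarrow> nat" where "ins q j = (if j < q then j else Suc j)"
definition del :: "nat \<Rightarrow> nat \<Rightarrow> nat" where "del q k = (if k < q then k else k - 1)"

lemma sum_reindex_ins:
  fixes f :: "nat \<Rightarrow> 'a::comm_monoid_add"
  assumes "q < n" "f q = 0"
  shows "(\<Sum>k<n. f k) = (\<Sum>j<n-1. f (ins q j))"
proof -
  have "(\<Sum>k<n. f k) = f q + (\<Sum>k\<in>{..<n}-{q}. f k)"
    using assms by (simp add: sum.remove)
  also have "\<dots> = (\<Sum>k\<in>{..<n}-{q}. f k)" using assms by simp
  also have "{..<n}-{q} = ins q ` {..<n-1}"
  proof
    show "{..<n}-{q} \<subseteq> ins q ` {..<n-1}"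
    proof
      fix k assume k: "k \<in> {..<n}-{q}"
      show "k \<in> ins q ` {..<n-1}"
      proof (cases "k < q")
        case True then show ?thesis using k assms by (auto simp: ins_def image_iff intro!: bexI[of _ k])
      next
        case False then have "k = ins q (k-1)" "k - 1 < n - 1" using k by (auto simp: ins_def)
        then show ?thesis by blast
      qed
    qed
    show "ins q ` {..<n-1} \<subseteq> {..<n}-{q}" using assms by (auto simp: ins_def)
  qed
  also have "(\<Sum>k\<in>ins q ` {..<n-1}. f k) = (\<Sum>j<n-1. f (ins q j))"
    by (rule sum.reindex_cong[where l="ins q"]) (auto simp: inj_on_def ins_def split: if_splits)
  finally show ?thesis .
qed

lemma ins_del: "k \<noteq> q \<Longrightarrow> ins q (del q k) = k" by (auto simp: ins_def del_def)
lemma del_ins: "del q (ins q j) = j" by (auto simp: ins_def del_def)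
lemma del_lt: "k < n \<Longrightarrow> k \<noteq> q \<Longrightarrow> q < n \<Longrightarrow> del q k < n - 1" by (auto simp: del_def)
lemma ins_lt: "j < n - 1 \<Longrightarrow> ins q j < n" by (auto simp: ins_def)
lemma ins_neq: "ins q j \<noteq> q" by (auto simp: ins_def)

lemma lap_entry: "i < n \<Longrightarrow> j < n \<Longrightarrow> laplacian n m $$ (i,j) = (if i = j then int (mg_deg n m i) else - int (m i j))"
  by (simp add: laplacian_def)

lemma lap_dim[simp]: "laplacian n m \<in> carrier_mat n n" by (simp add: laplacian_def)

lemma row_sum:
  fixes z :: "nat \<Rightarrow> real"
  assumes mg: "multigraph n m" and v: "v < n"
  shows "(\<Sum>k<n. real_of_int (laplacian n m $$ (v,k)) * z k) = (\<Sum>k<n. real (m v k) * (z v - z k))"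
proof -
  have mvv: "m v v = 0" using mg v by (simp add: multigraph_def)
  have "(\<Sum>k<n. real_of_int (laplacian n m $$ (v,k)) * z k)
      = (\<Sum>k<n. (if k = v then real (mg_deg n m v) * z k else 0) - real (m v k) * z k)"
    by (rule sum.cong) (auto simp: lap_entry v mvv)
  also have "\<dots> = real (mg_deg n m v) * z v - (\<Sum>k<n. real (m v k) * z k)"
    using v by (simp add: sum_subtractf sum.delta)
  also have "\<dots> = (\<Sum>k<n. real (m v k) * (z v - z k))"
    by (simp add: mg_deg_def right_diff_distrib sum_subtractf sum_distrib_right)
  finally show ?thesis .
qed

lemma deg_pos:
  assumes conn: "mg_connected n m" and v: "v < n" and q: "q < n" and vq: "v \<noteq> q"
  shows "\<exists>b<n. 0 < m v b"
proof -
  have "(v, q) \<in> (mg_edges n m)\<^sup>*" using conn v q by (simp add: mg_connected_def)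
  then show ?thesis using vq
    by (cases rule: converse_rtranclE) (auto simp: mg_edges_def)
qed

lemma harm:
  fixes z :: "nat \<Rightarrow> real"
  assumes mg: "multigraph n m" and conn: "mg_connected n m" and q: "q < n" and zq: "z q = 0"
    and h: "\<forall>v<n. v \<noteq> q \<longrightarrow> (\<Sum>k<n. real (m v k) * (z v - z k)) = 0"
  shows "\<forall>k<n. z k \<le> 0"
proof (rule ccontr)
  assume "\<not> ?thesis"
  then obtain k0 where k0: "k0 < n" "z k0 > 0" by force
  define M where "M = Max (z ` {..<n})"
  have fin: "finite (z ` {..<n})" by simp
  have Mge: "\<And>k. k < n \<Longrightarrow> z k \<le> M" unfolding M_def using fin by auto
  have "M \<in> z ` {..<n}" unfolding M_def using q by (intro Max_in) auto
  then obtain a where a: "a < n" "z a = M" by auto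
  have Mpos: "M > 0" using Mge[OF k0(1)] k0 by simp
  have stepM: "z b = M" if "z c = M" "c < n" "b < n" "0 < m c b" "c \<noteq> q" for b c
  proof -
    have s0: "(\<Sum>k<n. real (m c k) * (z c - z k)) = 0" using h that(2,5) by blast
    have nn: "\<And>k. k\<in>{..<n} \<Longrightarrow> 0 \<le> real (m c k) * (z c - z k)" using Mge that(1) by auto
    have "\<forall>k\<in>{..<n}. real (m c k) * (z c - z k) = 0"
      using sum_nonneg_eq_0_iff[of "{..<n}" "\<lambda>k. real (m c k) * (z c - z k)"] nn s0 by blast
    then have "real (m c b) * (z c - z b) = 0" using that by blast
    then show ?thesis using that by simp
  qed
  have "(a, q) \<in> (mg_edges n m)\<^sup>*" using conn a q by (simp add: mg_connected_def)
  then have "z a = M \<longrightarrow> z q = M"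
  proof (induction rule: converse_rtrancl_induct)
    case base then show ?case by simp
  next
    case (step c b)
    show ?case
    proof
      assume zc: "z c = M"
      show "z q = M"
      proof (cases "c = q")
        case True then show ?thesis using zc by simp
      next
        case False
        have e: "c < n" "b < n" "0 < m c b" using step.hyps(1) by (auto simp: mg_edges_def)
        have "z b = M" by (rule stepM[OF zc e False])
        then show ?thesis using step.IH by simp
      qed
    qed
  qed
  then show False using a zq Mpos by simp
qed


lemma mv_entry: "A \<in> carrier_mat r c \<Longrightarrow> v \<in> carrier_vec c \<Longrightarrow> i < r \<Longrightarrow>
   (A *\<^sub>v v) $ i = (\<Sum>j<c. A $$ (i,j) * v $ j)"
  by (auto simp: scalar_prod_def atLeast0LessThan intro!: sum.cong)

lemma red_carrier: "reduced_laplacian n m q \<in> carrier_mat (n-1) (n-1)"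
  unfolding reduced_laplacian_def by (auto intro: mat_delete_carrier simp: laplacian_def)

lemma red_entry: "i < n - 1 \<Longrightarrow> j < n - 1 \<Longrightarrow>
   reduced_laplacian n m q $$ (i,j) = real_of_int (laplacian n m $$ (ins q i, ins q j))"
  unfolding reduced_laplacian_def mat_delete_def ins_def by (simp add: laplacian_def)

lemma red_kernel:
  assumes mg: "multigraph n m" and conn: "mg_connected n m" and q: "q < n"
    and y: "y \<in> carrier_vec (n-1)" and Ay: "reduced_laplacian n m q *\<^sub>v y = 0\<^sub>v (n-1)"
  shows "y = 0\<^sub>v (n-1)"
proof -
  define z where "z k = (if k = q then 0 else y $ del q k)" for k
  have zins: "z (ins q j) = y $ j" for j by (simp add: z_def ins_neq del_ins)
  have hz: "(\<Sum>k<n. real (m v k) * (z v - z k)) = 0" if v: "v < n" "v \<noteq> q" for v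
  proof -
    have dv: "del q v < n - 1" using del_lt v q by auto
    have "0 = (reduced_laplacian n m q *\<^sub>v y) $ del q v" using Ay dv by simp
    also have "\<dots> = (\<Sum>j<n-1. reduced_laplacian n m q $$ (del q v, j) * y $ j)"
      by (rule mv_entry[OF red_carrier y dv])
    also have "\<dots> = (\<Sum>j<n-1. real_of_int (laplacian n m $$ (v, ins q j)) * z (ins q j))"
      using dv by (intro sum.cong) (auto simp: red_entry ins_del v zins)
    also have "\<dots> = (\<Sum>k<n. real_of_int (laplacian n m $$ (v, k)) * z k)"
      by (rule sum_reindex_ins[symmetric, OF q]) (simp add: z_def)
    also have "\<dots> = (\<Sum>k<n. real (m v k) * (z v - z k))" by (rule row_sum[OF mg v(1)])
    finally show ?thesis by simp
  qed
  have le1: "\<forall>k<n. z k \<le> 0"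
    by (rule harm[OF mg conn q]) (use hz in \<open>auto simp: z_def\<close>)
  have le2: "\<forall>k<n. - z k \<le> 0"
  proof (rule harm[OF mg conn q, of "\<lambda>k. - z k"])
    show "- z q = 0" by (simp add: z_def)
    show "\<forall>v<n. v \<noteq> q \<longrightarrow> (\<Sum>k<n. real (m v k) * (- z v - - z k)) = 0"
    proof (intro allI impI)
      fix v assume "v < n" "v \<noteq> q"
      then have "(\<Sum>k<n. real (m v k) * (z v - z k)) = 0" by (rule hz)
      then have "- (\<Sum>k<n. real (m v k) * (z v - z k)) = 0" by simp
      then show "(\<Sum>k<n. real (m v k) * (- z v - - z k)) = 0"
        by (simp add: sum_negf[symmetric] algebra_simps)
    qed
  qed
  show ?thesis
  proof (rule eq_vecI)
    fix j assume "j < dim_vec (0\<^sub>v (n - 1) :: real vec)"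
    then have j: "j < n - 1" by simp
    then have "ins q j < n" by (rule ins_lt)
    then have "z (ins q j) = 0" using le1 le2 by force
    then show "y $ j = 0\<^sub>v (n - 1) $ j" using j zins by simp
  qed (use y in simp)
qed

lemma red_inv:
  assumes mg: "multigraph n m" and conn: "mg_connected n m" and q: "q < n"
  shows "reduced_laplacian_inv n m q \<in> carrier_mat (n-1) (n-1) \<and>
      reduced_laplacian n m q * reduced_laplacian_inv n m q = 1\<^sub>m (n-1) \<and>
      reduced_laplacian_inv n m q * reduced_laplacian n m q = 1\<^sub>m (n-1)"
proof -
  let ?A = "reduced_laplacian n m q"
  have A: "?A \<in> carrier_mat (n-1) (n-1)" by (rule red_carrier)
  have "det ?A \<noteq> 0"
    using det_0_iff_vec_prod_zero_field[OF A] red_kernel[OF mg conn q] by blast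
  from det_non_zero_imp_unit[OF A this, of "()"]
  obtain B where B: "B \<in> carrier_mat (n-1) (n-1)" "B * ?A = 1\<^sub>m (n-1)" "?A * B = 1\<^sub>m (n-1)"
    unfolding Units_def ring_mat_def by auto
  have "reduced_laplacian_inv n m q = B"
    unfolding reduced_laplacian_inv_def
  proof (rule the_equality)
    show "B \<in> carrier_mat (n - 1) (n - 1) \<and> ?A * B = 1\<^sub>m (n - 1) \<and> B * ?A = 1\<^sub>m (n - 1)" using B by simp
    fix C assume C: "C \<in> carrier_mat (n - 1) (n - 1) \<and> ?A * C = 1\<^sub>m (n - 1) \<and> C * ?A = 1\<^sub>m (n - 1)"
    have "C = C * (?A * B)" using B(3) C right_mult_one_mat[of C "n-1" "n-1"] by auto
    also have "\<dots> = (C * ?A) * B" using A B(1) C assoc_mult_mat[of C "n-1" "n-1" ?A "n-1" B "n-1"] by auto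
    also have "\<dots> = B" using B(1) C by auto
    finally show "C = B" .
  qed
  then show ?thesis using B by simp
qed


lemma L_carrier: "L_mat n m q \<in> carrier_mat n n" by (simp add: L_mat_def)

lemma Lx_q:
  assumes q: "q < n" and d: "d \<in> carrier_vec n"
  shows "(L_mat n m q *\<^sub>v d) $ q = 0"
  unfolding mv_entry[OF L_carrier d q] using q by (simp add: L_mat_def)

lemma Lx_other:
  assumes q: "q < n" and d: "d \<in> carrier_vec n" and k: "k < n" "k \<noteq> q"
  shows "(L_mat n m q *\<^sub>v d) $ k =
     (\<Sum>i<n-1. reduced_laplacian_inv n m q $$ (del q k, i) * d $ ins q i)"
proof -
  have "(L_mat n m q *\<^sub>v d) $ k = (\<Sum>j<n. L_mat n m q $$ (k,j) * d $ j)"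
    by (rule mv_entry[OF L_carrier d k(1)])
  also have "\<dots> = (\<Sum>i<n-1. L_mat n m q $$ (k, ins q i) * d $ ins q i)"
    by (rule sum_reindex_ins[OF q]) (use q k in \<open>simp add: L_mat_def\<close>)
  also have "\<dots> = (\<Sum>i<n-1. reduced_laplacian_inv n m q $$ (del q k, i) * d $ ins q i)"
    by (intro sum.cong refl) (use k in \<open>auto simp: L_mat_def ins_lt ins_neq del_def ins_def\<close>)
  finally show ?thesis .
qed

lemma QLx:
  assumes mg: "multigraph n m" and conn: "mg_connected n m" and q: "q < n"
    and d: "d \<in> carrier_vec n" and v: "v < n" "v \<noteq> q"
  shows "(\<Sum>k<n. real_of_int (laplacian n m $$ (v,k)) * (L_mat n m q *\<^sub>v d) $ k) = d $ v"
proof -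
  let ?A = "reduced_laplacian n m q"
  let ?B = "reduced_laplacian_inv n m q"
  note inv = red_inv[OF mg conn q]
  define dr where "dr = vec (n-1) (\<lambda>i. d $ ins q i)"
  have dr: "dr \<in> carrier_vec (n-1)" by (simp add: dr_def)
  have Bdr: "?B *\<^sub>v dr \<in> carrier_vec (n-1)" using inv dr by auto
  have dv: "del q v < n - 1" using del_lt v q by auto
  have xk: "(L_mat n m q *\<^sub>v d) $ ins q i = (?B *\<^sub>v dr) $ i" if i: "i < n - 1" for i
  proof -
    have "(?B *\<^sub>v dr) $ i = (\<Sum>j<n-1. ?B $$ (i,j) * dr $ j)"
      by (rule mv_entry[of ?B "n-1" "n-1" dr i]) (use inv dr i in auto)
    then show ?thesis using Lx_other[OF q d ins_lt[OF i] ins_neq] by (simp add: del_ins dr_def)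
  qed
  have "(\<Sum>k<n. real_of_int (laplacian n m $$ (v,k)) * (L_mat n m q *\<^sub>v d) $ k)
     = (\<Sum>i<n-1. real_of_int (laplacian n m $$ (v,ins q i)) * (L_mat n m q *\<^sub>v d) $ ins q i)"
    by (rule sum_reindex_ins[OF q]) (simp add: Lx_q[OF q d])
  also have "\<dots> = (\<Sum>i<n-1. ?A $$ (del q v, i) * (?B *\<^sub>v dr) $ i)"
    by (intro sum.cong refl) (use dv v in \<open>simp add: xk red_entry ins_del\<close>)
  also have "\<dots> = (?A *\<^sub>v (?B *\<^sub>v dr)) $ del q v"
    by (rule mv_entry[OF red_carrier Bdr dv, symmetric])
  also have "?A *\<^sub>v (?B *\<^sub>v dr) = (?A * ?B) *\<^sub>v dr"
    using inv dr red_carrier by (metis assoc_mult_mat_vec)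
  also have "\<dots> = dr" using inv dr by simp
  also have "dr $ del q v = d $ v" using dv v by (simp add: dr_def ins_del)
  finally show ?thesis .
qed

theorem mainTheorem11:
  fixes n :: nat and m :: "nat \<Rightarrow> nat \<Rightarrow> nat" and q :: nat and D D' :: "int vec"
  assumes "multigraph n m"
    and "mg_connected n m"
    and "q < n"
    and "D \<in> carrier_vec n"
    and "D' = D - laplacian n m *\<^sub>v
           map_vec floor (L_mat n m q *\<^sub>v map_vec real_of_int D)"
  shows "div_equiv n m D' D \<and>
         (\<forall>v<n. v \<noteq> q \<longrightarrow> \<bar>D' $ v\<bar> < int (mg_deg n m v))"
proof -
  note mg = assms(1) and conn = assms(2) and q = assms(3) and D = assms(4)
  define d where "d = map_vec real_of_int D"
  define x where "x = L_mat n m q *\<^sub>v d"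
  define f where "f = map_vec floor x"
  have d: "d \<in> carrier_vec n" using D by (simp add: d_def)
  have x: "x \<in> carrier_vec n" using L_carrier[of n m q] d unfolding x_def by (rule mult_mat_vec_carrier)
  have f: "f \<in> carrier_vec n" using x by (simp add: f_def)
  have D'eq: "D' = D - laplacian n m *\<^sub>v f" using assms(5) by (simp add: f_def x_def d_def)
  have Qf: "laplacian n m *\<^sub>v f \<in> carrier_vec n" using lap_dim f by (rule mult_mat_vec_carrier)
  have dQf: "dim_vec (laplacian n m *\<^sub>v f) = n" "dim_vec D = n" using Qf D by (auto simp: laplacian_def)
  have part1: "div_equiv n m D' D"
    unfolding div_equiv_def
  proof (intro bexI)
    show "- f \<in> carrier_vec n" using f by simp
    show "D' - D = laplacian n m *\<^sub>v - f"
    proof (rule eq_vecI)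
      fix i assume "i < dim_vec (laplacian n m *\<^sub>v - f)"
      then have i: "i < n" by (simp add: laplacian_def)
      have "(laplacian n m *\<^sub>v - f) $ i = (\<Sum>j<n. laplacian n m $$ (i,j) * (- f) $ j)"
        by (rule mv_entry[OF lap_dim _ i]) (use f in simp)
      also have "\<dots> = - (\<Sum>j<n. laplacian n m $$ (i,j) * f $ j)"
        using f by (simp add: sum_negf[symmetric])
      also have "(\<Sum>j<n. laplacian n m $$ (i,j) * f $ j) = (laplacian n m *\<^sub>v f) $ i"
        by (rule mv_entry[OF lap_dim f i, symmetric])
      finally show "(D' - D) $ i = (laplacian n m *\<^sub>v - f) $ i" using D'eq dQf i by simp
    qed (use D'eq D Qf in \<open>simp add: laplacian_def\<close>)
  qed
  have part2: "\<bar>D' $ v\<bar> < int (mg_deg n m v)" if v: "v < n" "v \<noteq> q" for v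
  proof -
    define r where "r k = x $ k - of_int (floor (x $ k))" for k
    have r: "0 \<le> r k" "r k < 1" for k unfolding r_def by linarith+
    have "real_of_int (D' $ v) = d $ v - real_of_int ((laplacian n m *\<^sub>v f) $ v)"
      using D'eq dQf v by (simp add: d_def)
    also have "(laplacian n m *\<^sub>v f) $ v = (\<Sum>k<n. laplacian n m $$ (v,k) * f $ k)"
      by (rule mv_entry[OF lap_dim f v(1)])
    also have "d $ v = (\<Sum>k<n. real_of_int (laplacian n m $$ (v,k)) * x $ k)"
      using QLx[OF mg conn q d v] by (simp add: x_def)
    also have "(\<Sum>k<n. real_of_int (laplacian n m $$ (v,k)) * x $ k) -
        real_of_int (\<Sum>k<n. laplacian n m $$ (v,k) * f $ k)
      = (\<Sum>k<n. real_of_int (laplacian n m $$ (v,k)) * r k)"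
      using x by (simp add: r_def f_def sum_subtractf[symmetric] right_diff_distrib)
    also have "\<dots> = (\<Sum>k<n. real (m v k) * (r v - r k))" by (rule row_sum[OF mg v(1)])
    finally have eq: "real_of_int (D' $ v) = (\<Sum>k<n. real (m v k) * (r v - r k))" .
    obtain b where b: "b < n" "0 < m v b" using deg_pos[OF conn v(1) q v(2)] by blast
    have "\<bar>\<Sum>k<n. real (m v k) * (r v - r k)\<bar> \<le> (\<Sum>k<n. \<bar>real (m v k) * (r v - r k)\<bar>)"
      by (rule sum_abs)
    also have "\<dots> < (\<Sum>k<n. real (m v k))"
    proof (rule sum_strict_mono_ex1)
      have ab: "\<bar>r v - r k\<bar> < 1" for k using r[of v] r[of k] by linarith
      show "\<forall>k\<in>{..<n}. \<bar>real (m v k) * (r v - r k)\<bar> \<le> real (m v k)"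
      proof
        fix k
        have "\<bar>real (m v k) * (r v - r k)\<bar> = real (m v k) * \<bar>r v - r k\<bar>" by (simp add: abs_mult)
        also have "\<dots> \<le> real (m v k) * 1" using ab[of k] by (intro mult_left_mono) auto
        finally show "\<bar>real (m v k) * (r v - r k)\<bar> \<le> real (m v k)" by simp
      qed
      have "\<bar>real (m v b) * (r v - r b)\<bar> = real (m v b) * \<bar>r v - r b\<bar>" by (simp add: abs_mult)
      also have "\<dots> < real (m v b) * 1" using ab[of b] b by (intro mult_strict_left_mono) auto
      finally show "\<exists>k\<in>{..<n}. \<bar>real (m v k) * (r v - r k)\<bar> < real (m v k)" using b by auto
    qed simp
    also have "\<dots> = real (mg_deg n m v)" by (simp add: mg_deg_def)
    finally have "\<bar>real_of_int (D' $ v)\<bar> < real (mg_deg n m v)" using eq by simp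
    then show ?thesis by linarith
  qed
  show ?thesis using part1 part2 by blast
qed

end
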